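(* Let $\mathcal{N}\subseteq\mathbb{R}^n$ be a smooth manifold with volume form $dV$ inherited from $\mathbb{R}^n$, let $q>0$ be a weight function on $\mathcal{N}$, and let $\{\psi_k\}_{k\in\mathbb{N}^+}$ be a complete orthonormal basis of $L^2(\mathcal{N},q)$. Let $\boldsymbol{\theta}_1,\dots,\boldsymbol{\theta}_M$ be parameter values, and for each $j$ let $p(\mathbf{y}|\boldsymbol{\theta}_j)$ be a probability density on $\mathcal{N}$ (w.r.t. $dV$) with $p(\cdot|\boldsymbol{\theta}_j)\in\mathcal{H}_{q^{-1}}(\mathcal{N})$, and let $\mathbf{y}_{1,j},\dots,\mathbf{y}_{N,j}$ be i.i.d. samples with density $p(\cdot|\boldsymbol{\theta}_j)$. Assume $\mathrm{Var}_{\mathbf{Y}|\boldsymbol{\theta}_j}[\psi_k(\mathbf{Y})]<\infty$ for all $k\in\mathbb{N}^+$ and all $j=1,\dots,M$. Define $c_{\mathbf{Y}|\boldsymbol{\theta}_j,k}=\int_{\mathcal{N}}p(\mathbf{y}|\boldsymbol{\theta}_j)\psi_k(\mathbf{y})\,dV$, $\widehat c_{\mathbf{Y}|\boldsymbol{\theta}_j,k}=\frac1N\sum_{i=1}^N\psi_k(\mathbf{y}_{i,j})$, and for $K_1\in\mathbb{N}^+$, $$\widehat p(\mathbf{y}|\boldsymbol{\theta}_j)=\sum_{k=1}^{K_1}\widehat c_{\mathbf{Y}|\boldsymbol{\theta}_j,k}\psi_k(\mathbf{y})q(\mathbf{y}),\quad \widehat e(\mathbf{y}|\boldsymbol{\theta}_j)=p(\mathbf{y}|\boldsymbol{\theta}_j)-\widehat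 p(\mathbf{y}|\boldsymbol{\theta}_j),$$ $$\widehat e_{L^2}=\Big(\sum_{j=1}^M\int_{\mathcal{N}}|\widehat e(\mathbf{y}|\boldsymbol{\theta}_j)|^2q^{-1}(\mathbf{y})\,dV\Big)^{1/2}.$$ Then, with $\mathbb{E}$ and $\mathrm{Var}$ taken with respect to the joint distribution of the samples, $$\mathbb{E}[\widehat e_{L^2}]\le\Big(\sum_{j=1}^M\sum_{k=K_1+1}^\infty c_{\mathbf{Y}|\boldsymbol{\theta}_j,k}^2+\frac1N\sum_{j=1}^M\sum_{k=1}^{K_1}\mathrm{Var}_{\mathbf{Y}|\boldsymbol{\theta}_j}[\psi_k(\mathbf{Y})]\Big)^{1/2},$$ $$\mathrm{Var}[\widehat e_{L^2}]\le\sum_{j=1}^M\sum_{k=K_1+1}^\infty c_{\mathbf{Y}|\boldsymbol{\theta}_j,k}^2+\frac1N\sum_{j=1}^M\sum_{k=1}^{K_1}\mathrm{Var}_{\mathbf{Y}|\boldsymbol{\theta}_j}[\psi_k(\mathbf{Y})].$$ Moreover, $\mathbb{E}[\widehat e_{L^2}]$ and $\mathrm{Var}[\widehat e_{L^2}]$ converge to zero as first $K_1\to\infty$ and then $N\to\infty$: for every $\varepsilon>0$ there is $K_1$ and $N_{\min}$ (depending on $K_1$ and $\varepsilon$) such that for all $N>N_{\min}$ both $\mathbb{E}[\widehat e_{L^2}]<\varepsilon$ and $\mathrm{Var}[\widehat e_{L^2}]<\varepsilon$.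
   Context: $L^2(\mathcal{N},w)$ denotes the Hilbert space of functions $f$ on $\mathcal{N}$ with $\int_{\mathcal{N}}|f|^2 w\,dV<\infty$ and inner product $\int fg\,w\,dV$; orthonormality of $\{\psi_k\}$ means $\int\psi_k\psi_l\,q\,dV=\delta_{kl}$, so $\Psi_k:=\psi_kq$ form an orthonormal basis of $L^2(\mathcal{N},q^{-1})$. The space $\mathcal{H}_{q^{-1}}(\mathcal{N})$ is the reproducing kernel Hilbert space generated by a kernel $K(\mathbf{y},\mathbf{y}')=\sum_k\lambda_k\Psi_k(\mathbf{y})\Psi_k(\mathbf{y}')$ with positive eigenvalues $\lambda_k$ (of the associated Hilbert–Schmidt integral operator on $L^2(\mathcal{N},q^{-1})$): it consists of those $f=\sum_k\hat f_k\Psi_k\in L^2(\mathcal{N},q^{-1})$, $\hat f_k=\int f\psi_k\,dV$, with $\sum_k|\hat f_k|^2/\lambda_k<\infty$; in particular $\mathcal{H}_{q^{-1}}(\mathcal{N})\subset L^2(\mathcal{N},q^{-1})$. *)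

theory Defs
  imports "HOL-Probability.Probability"
begin

text \<open>The manifold with its volume form is modelled as a measure space Mv
  (carrier = the manifold, measure = dV). Indices k range over positive naturals.\<close>

definition L2w :: "'a measure \<Rightarrow> ('a \<Rightarrow> real) \<Rightarrow> ('a \<Rightarrow> real) \<Rightarrow> bool" where
  "L2w Mv w f \<longleftrightarrow> f \<in> borel_measurable Mv \<and> integrable Mv (\<lambda>y. (f y)\<^sup>2 * w y)"

definition complete_orthonormal :: "'a measure \<Rightarrow> ('a \<Rightarrow> real) \<Rightarrow> (nat \<Rightarrow> 'a \<Rightarrow> real) \<Rightarrow> bool" where
  "complete_orthonormal Mv q \<psi> \<longleftrightarrow>
     (\<forall>k\<ge>1. \<psi> k \<in> borel_measurable Mv) \<and>
     (\<forall>k\<ge>1. \<forall>l\<ge>1. integrable Mv (\<lambda>y. \<psi> k y * \<psi> l y * q y) \<and>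
        (LINT y|Mv. \<psi> k y * \<psi> l y * q y) = (if k = l then 1 else 0)) \<and>
     (\<forall>f. L2w Mv q f \<and> (\<forall>k\<ge>1. (LINT y|Mv. f y * \<psi> k y * q y) = 0)
          \<longrightarrow> (AE y in Mv. f y = 0))"

definition coef :: "'a measure \<Rightarrow> (nat \<Rightarrow> 'a \<Rightarrow> real) \<Rightarrow> ('a \<Rightarrow> real) \<Rightarrow> nat \<Rightarrow> real" where
  "coef Mv \<psi> f k = (LINT y|Mv. f y * \<psi> k y)"

text \<open>RKHS H_{q^{-1}} generated by K = sum_k lam_k Psi_k Psi_k', Psi_k = psi_k q.\<close>
definition in_RKHS :: "'a measure \<Rightarrow> ('a \<Rightarrow> real) \<Rightarrow> (nat \<Rightarrow> 'a \<Rightarrow> real) \<Rightarrow> (nat \<Rightarrow> real)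
    \<Rightarrow> ('a \<Rightarrow> real) \<Rightarrow> bool" where
  "in_RKHS Mv q \<psi> lam f \<longleftrightarrow> L2w Mv (\<lambda>y. inverse (q y)) f \<and>
     summable (\<lambda>k. (coef Mv \<psi> f (Suc k))\<^sup>2 / lam (Suc k))"

definition prob_density :: "'a measure \<Rightarrow> ('a \<Rightarrow> real) \<Rightarrow> bool" where
  "prob_density Mv f \<longleftrightarrow> f \<in> borel_measurable Mv \<and> (\<forall>y\<in>space Mv. f y \<ge> 0) \<and>
     integrable Mv f \<and> (LINT y|Mv. f y) = 1"

definition var_psi :: "'a measure \<Rightarrow> (nat \<Rightarrow> 'a \<Rightarrow> real) \<Rightarrow> ('a \<Rightarrow> real) \<Rightarrow> nat \<Rightarrow> real" where
  "var_psi Mv \<psi> f k = (LINT y|Mv. f y * (\<psi> k y)\<^sup>2) - (coef Mv \<psi> f k)\<^sup>2"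

definition iid_samples :: "'w measure \<Rightarrow> 'a measure \<Rightarrow> (nat \<Rightarrow> nat \<Rightarrow> 'w \<Rightarrow> 'a) \<Rightarrow> nat \<Rightarrow> nat
    \<Rightarrow> (nat \<Rightarrow> 'a \<Rightarrow> real) \<Rightarrow> bool" where
  "iid_samples P Mv Y N Mc f \<longleftrightarrow> prob_space P \<and>
     (\<forall>j\<in>{1..Mc}. prob_space.indep_vars P (\<lambda>_. Mv) (\<lambda>i. Y i j) {1..N} \<and>
        (\<forall>i\<in>{1..N}. distributed P Mv (Y i j) (\<lambda>y. ennreal (f j y))))"

definition c_hat :: "(nat \<Rightarrow> 'a \<Rightarrow> real) \<Rightarrow> (nat \<Rightarrow> nat \<Rightarrow> 'w \<Rightarrow> 'a) \<Rightarrow> nat \<Rightarrow> nat \<Rightarrow> nat \<Rightarrow> 'w \<Rightarrow> real" where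
  "c_hat \<psi> Y N j k \<omega> = (\<Sum>i=1..N. \<psi> k (Y i j \<omega>)) / real N"

definition p_hat :: "(nat \<Rightarrow> 'a \<Rightarrow> real) \<Rightarrow> ('a \<Rightarrow> real) \<Rightarrow> (nat \<Rightarrow> nat \<Rightarrow> 'w \<Rightarrow> 'a) \<Rightarrow> nat \<Rightarrow> nat
    \<Rightarrow> nat \<Rightarrow> 'a \<Rightarrow> 'w \<Rightarrow> real" where
  "p_hat \<psi> q Y N K1 j y \<omega> = (\<Sum>k=1..K1. c_hat \<psi> Y N j k \<omega> * \<psi> k y * q y)"

definition e_L2 :: "'a measure \<Rightarrow> (nat \<Rightarrow> 'a \<Rightarrow> real) \<Rightarrow> ('a \<Rightarrow> real) \<Rightarrow> (nat \<Rightarrow> 'a \<Rightarrow> real) \<Rightarrow> nat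
    \<Rightarrow> (nat \<Rightarrow> nat \<Rightarrow> 'w \<Rightarrow> 'a) \<Rightarrow> nat \<Rightarrow> nat \<Rightarrow> 'w \<Rightarrow> real" where
  "e_L2 Mv \<psi> q f Mc Y N K1 \<omega> =
     sqrt (\<Sum>j=1..Mc. LINT y|Mv. (f j y - p_hat \<psi> q Y N K1 j y \<omega>)\<^sup>2 * inverse (q y))"

definition err_bound :: "'a measure \<Rightarrow> (nat \<Rightarrow> 'a \<Rightarrow> real) \<Rightarrow> (nat \<Rightarrow> 'a \<Rightarrow> real) \<Rightarrow> nat \<Rightarrow> nat \<Rightarrow> nat \<Rightarrow> real" where
  "err_bound Mv \<psi> f Mc N K1 =
     (\<Sum>j=1..Mc. \<Sum>k. (coef Mv \<psi> (f j) (k + K1 + 1))\<^sup>2)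
     + (1 / real N) * (\<Sum>j=1..Mc. \<Sum>k=1..K1. var_psi Mv \<psi> (f j) k)"

end

theory Submission
  imports Defs
begin

lemma int_prod:
  fixes a b q :: "'a \<Rightarrow> real"
  assumes [measurable]: "a \<in> borel_measurable M" "b \<in> borel_measurable M" "q \<in> borel_measurable M"
    and qn: "\<forall>y\<in>space M. q y \<ge> 0"
    and ia: "integrable M (\<lambda>y. (a y)\<^sup>2 * q y)" and ib: "integrable M (\<lambda>y. (b y)\<^sup>2 * q y)"
  shows "integrable M (\<lambda>y. a y * b y * q y)"
proof (rule Bochner_Integration.integrable_bound[where f="\<lambda>y. ((a y)\<^sup>2 * q y + (b y)\<^sup>2 * q y) / 2"])
  show "integrable M (\<lambda>y. ((a y)\<^sup>2 * q y + (b y)\<^sup>2 * q y) / 2)" using ia ib by auto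
  show "(\<lambda>y. a y * b y * q y) \<in> borel_measurable M" by measurable
  show "AE y in M. norm (a y * b y * q y) \<le> norm (((a y)\<^sup>2 * q y + (b y)\<^sup>2 * q y) / 2)"
  proof (rule AE_I2)
    fix y assume y: "y \<in> space M"
    have q0: "q y \<ge> 0" using qn y by auto
    have "\<bar>a y * b y\<bar> \<le> ((a y)\<^sup>2 + (b y)\<^sup>2) / 2"
    proof -
      have "0 \<le> (\<bar>a y\<bar> - \<bar>b y\<bar>)\<^sup>2" by simp
      then show ?thesis by (simp add: power2_diff abs_mult)
    qed
    then have "\<bar>a y * b y\<bar> * q y \<le> ((a y)\<^sup>2 + (b y)\<^sup>2) / 2 * q y" using q0 by (rule mult_right_mono)
    then show "norm (a y * b y * q y) \<le> norm (((a y)\<^sup>2 * q y + (b y)\<^sup>2 * q y) / 2)"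
      using q0 by (simp add: abs_mult algebra_simps)
  qed
qed

lemma amgm_int:
  fixes a b q :: "'a \<Rightarrow> real"
  assumes [measurable]: "a \<in> borel_measurable M" "b \<in> borel_measurable M" "q \<in> borel_measurable M"
    and qn: "\<forall>y\<in>space M. q y \<ge> 0"
    and ia: "integrable M (\<lambda>y. (a y)\<^sup>2 * q y)" and ib: "integrable M (\<lambda>y. (b y)\<^sup>2 * q y)"
    and s: "s > 0"
  shows "\<bar>LINT y|M. a y * b y * q y\<bar> \<le> (s * (LINT y|M. (a y)\<^sup>2 * q y) + (LINT y|M. (b y)\<^sup>2 * q y) / s) / 2"
proof -
  have iab: "integrable M (\<lambda>y. a y * b y * q y)" by (rule int_prod) (use assms in auto)
  have "\<bar>LINT y|M. a y * b y * q y\<bar> \<le> (LINT y|M. \<bar>a y * b y * q y\<bar>)" by (rule integral_abs_bound)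
  also have "\<dots> \<le> (LINT y|M. (s * ((a y)\<^sup>2 * q y) + ((b y)\<^sup>2 * q y) / s) / 2)"
  proof (rule integral_mono)
    show "integrable M (\<lambda>y. \<bar>a y * b y * q y\<bar>)" using iab by auto
    show "integrable M (\<lambda>y. (s * ((a y)\<^sup>2 * q y) + ((b y)\<^sup>2 * q y) / s) / 2)" using ia ib by auto
    fix y assume y: "y \<in> space M"
    have q0: "q y \<ge> 0" using qn y by auto
    have "0 \<le> (s * \<bar>a y\<bar> - \<bar>b y\<bar>)\<^sup>2" by simp
    then have "2 * \<bar>a y * b y\<bar> * s \<le> s\<^sup>2 * (a y)\<^sup>2 + (b y)\<^sup>2"
      by (simp add: power2_diff abs_mult power_mult_distrib algebra_simps)
    then have "\<bar>a y * b y\<bar> \<le> (s * (a y)\<^sup>2 + (b y)\<^sup>2 / s) / 2"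
      using s by (simp add: field_simps power2_eq_square)
    then have "\<bar>a y * b y\<bar> * q y \<le> (s * (a y)\<^sup>2 + (b y)\<^sup>2 / s) / 2 * q y" using q0 by (rule mult_right_mono)
    then show "\<bar>a y * b y * q y\<bar> \<le> (s * ((a y)\<^sup>2 * q y) + ((b y)\<^sup>2 * q y) / s) / 2"
      using q0 by (simp add: abs_mult algebra_simps add_divide_distrib)
  qed
  also have "\<dots> = (s * (LINT y|M. (a y)\<^sup>2 * q y) + (LINT y|M. (b y)\<^sup>2 * q y) / s) / 2"
    using ia ib by simp
  finally show ?thesis .
qed

lemma fatou_L2:
  fixes F :: "nat \<Rightarrow> 'a \<Rightarrow> real"
  assumes [measurable]: "\<And>m. F m \<in> borel_measurable M" "G \<in> borel_measurable M" "q \<in> borel_measurable M"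
    and qn: "\<forall>y\<in>space M. q y \<ge> 0"
    and conv: "AE y in M. (\<lambda>m. F m y) \<longlonglongrightarrow> G y"
    and bnd: "\<And>m. m \<ge> mst \<Longrightarrow> integrable M (\<lambda>y. (F m y)\<^sup>2 * q y) \<and> (LINT y|M. (F m y)\<^sup>2 * q y) \<le> C"
  shows "integrable M (\<lambda>y. (G y)\<^sup>2 * q y)" and "(LINT y|M. (G y)\<^sup>2 * q y) \<le> C"
proof -
  have nnF: "AE y in M. 0 \<le> (F m y)\<^sup>2 * q y" for m
    using qn by (intro AE_I2) auto
  have "0 \<le> (LINT y|M. (F mst y)\<^sup>2 * q y)" by (rule integral_nonneg_AE) (rule nnF)
  then have C0: "0 \<le> C" using bnd[of mst] by auto
  have "(\<integral>\<^sup>+y. ennreal ((G y)\<^sup>2 * q y) \<partial>M) = (\<integral>\<^sup>+y. liminf (\<lambda>m. ennreal ((F m y)\<^sup>2 * q y)) \<partial>M)"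
  proof (rule nn_integral_cong_AE)
    show "AE y in M. ennreal ((G y)\<^sup>2 * q y) = liminf (\<lambda>m. ennreal ((F m y)\<^sup>2 * q y))"
      using conv
    proof eventually_elim
      fix y assume "(\<lambda>m. F m y) \<longlonglongrightarrow> G y"
      then have "(\<lambda>m. ennreal ((F m y)\<^sup>2 * q y)) \<longlonglongrightarrow> ennreal ((G y)\<^sup>2 * q y)"
        by (intro tendsto_ennrealI tendsto_intros)
      then show "ennreal ((G y)\<^sup>2 * q y) = liminf (\<lambda>m. ennreal ((F m y)\<^sup>2 * q y))"
        by (simp add: lim_imp_Liminf)
    qed
  qed
  also have "\<dots> \<le> liminf (\<lambda>m. \<integral>\<^sup>+y. ennreal ((F m y)\<^sup>2 * q y) \<partial>M)"
    by (rule nn_integral_liminf) measurable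
  also have "\<dots> \<le> limsup (\<lambda>m. \<integral>\<^sup>+y. ennreal ((F m y)\<^sup>2 * q y) \<partial>M)"
    by (intro Liminf_le_Limsup sequentially_bot)
  also have "\<dots> \<le> ennreal C"
  proof (rule Limsup_bounded)
    show "\<forall>\<^sub>F m in sequentially. (\<integral>\<^sup>+y. ennreal ((F m y)\<^sup>2 * q y) \<partial>M) \<le> ennreal C"
    proof (rule eventually_sequentiallyI[of mst])
      fix m assume m: "mst \<le> m"
      have "(\<integral>\<^sup>+y. ennreal ((F m y)\<^sup>2 * q y) \<partial>M) = ennreal (LINT y|M. (F m y)\<^sup>2 * q y)"
        using bnd[OF m] nnF by (intro nn_integral_eq_integral) auto
      then show "(\<integral>\<^sup>+y. ennreal ((F m y)\<^sup>2 * q y) \<partial>M) \<le> ennreal C"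
        using bnd[OF m] C0 by simp
    qed
  qed
  finally have nn: "(\<integral>\<^sup>+y. ennreal ((G y)\<^sup>2 * q y) \<partial>M) \<le> ennreal C" .
  have nnG: "AE y in M. 0 \<le> (G y)\<^sup>2 * q y" using qn by (intro AE_I2) auto
  show ig: "integrable M (\<lambda>y. (G y)\<^sup>2 * q y)"
  proof (rule integrableI_bounded)
    show "(\<lambda>y. (G y)\<^sup>2 * q y) \<in> borel_measurable M" by measurable
    have "(\<integral>\<^sup>+y. ennreal (norm ((G y)\<^sup>2 * q y)) \<partial>M) = (\<integral>\<^sup>+y. ennreal ((G y)\<^sup>2 * q y) \<partial>M)"
      using qn by (intro nn_integral_cong) auto
    also have "\<dots> < \<infinity>" using nn by (simp add: le_less_trans)
    finally show "(\<integral>\<^sup>+y. ennreal (norm ((G y)\<^sup>2 * q y)) \<partial>M) < \<infinity>" .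
  qed
  have "ennreal (LINT y|M. (G y)\<^sup>2 * q y) = (\<integral>\<^sup>+y. ennreal ((G y)\<^sup>2 * q y) \<partial>M)"
    using ig nnG by (intro nn_integral_eq_integral[symmetric]) auto
  with nn have "ennreal (LINT y|M. (G y)\<^sup>2 * q y) \<le> ennreal C" by simp
  with C0 show "(LINT y|M. (G y)\<^sup>2 * q y) \<le> C" by simp
qed

lemma pow_bound: "\<bar>b::real\<bar> \<le> (1/2)^j + 4^j * b\<^sup>2"
proof (cases "\<bar>b\<bar> \<le> (1/2)^j")
  case True
  then show ?thesis by (smt (verit) zero_le_power2 zero_le_power mult_nonneg_nonneg)
next
  case False
  have e: "(2::real)^j * (1/2)^j = 1" by (simp add: power_mult_distrib[symmetric])
  have p: "(0::real) < 2^j" by simp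
  have "1 < 2^j * \<bar>b\<bar>" using False e p
    by (smt (verit) mult_strict_left_mono)
  then have "2^j * \<bar>b\<bar> \<le> (2^j * \<bar>b\<bar>)\<^sup>2"
    using mult_left_mono[of 1 "2^j*\<bar>b\<bar>" "2^j*\<bar>b\<bar>"] unfolding power2_eq_square by simp
  also have "\<dots> = (2^j*2^j) * (\<bar>b\<bar>*\<bar>b\<bar>)" by (simp add: power2_eq_square mult_ac)
  also have "\<dots> = 4^j * b\<^sup>2" by (simp add: power_mult_distrib[symmetric] power2_eq_square abs_mult_self_eq)
  finally have "2^j * \<bar>b\<bar> \<le> 4^j * b\<^sup>2" .
  moreover have "\<bar>b\<bar> \<le> 2^j * \<bar>b\<bar>" by (simp add: mult_le_cancel_right1 one_le_power)
  moreover have "(0::real) \<le> (1/2)^j" by simp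
  ultimately show ?thesis by linarith
qed

lemma sample_moments:
  fixes P :: "'w measure" and Mv :: "'a measure" and Y :: "nat \<Rightarrow> 'w \<Rightarrow> 'a" and \<phi> f :: "'a \<Rightarrow> real"
  assumes ps: "prob_space P"
    and ind: "prob_space.indep_vars P (\<lambda>_. Mv) Y {1..N}"
    and dist: "\<forall>i\<in>{1..N}. distributed P Mv (Y i) (\<lambda>y. ennreal (f y))"
    and N: "N \<ge> 1"
    and phi[measurable]: "\<phi> \<in> borel_measurable Mv"
    and fnn: "\<forall>y\<in>space Mv. 0 \<le> f y"
    and fi: "integrable Mv f"
    and f2: "integrable Mv (\<lambda>y. f y * (\<phi> y)\<^sup>2)"
  shows "integrable P (\<lambda>\<omega>. (\<Sum>i=1..N. \<phi> (Y i \<omega>)) / real N)"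
    and "integrable P (\<lambda>\<omega>. ((\<Sum>i=1..N. \<phi> (Y i \<omega>)) / real N)\<^sup>2)"
    and "prob_space.expectation P (\<lambda>\<omega>. (\<Sum>i=1..N. \<phi> (Y i \<omega>)) / real N) = (LINT y|Mv. f y * \<phi> y)"
    and "prob_space.expectation P (\<lambda>\<omega>. ((\<Sum>i=1..N. \<phi> (Y i \<omega>)) / real N)\<^sup>2) =
          (LINT y|Mv. f y * \<phi> y)\<^sup>2 + ((LINT y|Mv. f y * (\<phi> y)\<^sup>2) - (LINT y|Mv. f y * \<phi> y)\<^sup>2) / real N"
proof -
  interpret prob_space P by fact
  define m1 where "m1 = (LINT y|Mv. f y * \<phi> y)"
  define m2 where "m2 = (LINT y|Mv. f y * (\<phi> y)\<^sup>2)"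
  define X where "X i \<omega> = \<phi> (Y i \<omega>)" for i \<omega>
  have fm[measurable]: "f \<in> borel_measurable Mv" using fi by auto
  have f1: "integrable Mv (\<lambda>y. f y * \<phi> y)"
  proof -
    have "integrable Mv (\<lambda>y. \<phi> y * 1 * f y)"
      by (rule int_prod) (use f2 fi fnn in \<open>auto simp: mult_ac\<close>)
    then show ?thesis by (simp add: mult_ac)
  qed
  have Ym: "Y i \<in> measurable P Mv" if "i \<in> {1..N}" for i
    using dist that distributed_measurable by blast
  have Xm: "X i \<in> borel_measurable P" if "i \<in> {1..N}" for i
    unfolding X_def using measurable_compose[OF Ym[OF that] phi] by (simp add: comp_def)
  have X1: "integrable P (X i) \<and> expectation (X i) = m1" if i: "i \<in> {1..N}" for i
  proof -
    have d: "distributed P Mv (Y i) (\<lambda>y. ennreal (f y))" using dist i by auto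
    show ?thesis
      using distributed_integrable[OF d phi] distributed_integral[OF d phi] f1 fnn
      unfolding X_def m1_def by auto
  qed
  have X2: "integrable P (\<lambda>\<omega>. (X i \<omega>)\<^sup>2) \<and> expectation (\<lambda>\<omega>. (X i \<omega>)\<^sup>2) = m2" if i: "i \<in> {1..N}" for i
  proof -
    have d: "distributed P Mv (Y i) (\<lambda>y. ennreal (f y))" using dist i by auto
    have p2: "(\<lambda>y. (\<phi> y)\<^sup>2) \<in> borel_measurable Mv" by measurable
    show ?thesis
      using distributed_integrable[OF d p2] distributed_integral[OF d p2] f2 fnn
      unfolding X_def m2_def by auto
  qed
  have indX: "indep_vars (\<lambda>_. borel) X {1..N}"
    unfolding X_def by (rule indep_vars_compose2[OF ind]) simp
  have Xprod: "integrable P (\<lambda>\<omega>. X i \<omega> * X i' \<omega>) \<and> expectation (\<lambda>\<omega>. X i \<omega> * X i' \<omega>) = (if i = i' then m2 else m1\<^sup>2)"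
    if i: "i \<in> {1..N}" and i': "i' \<in> {1..N}" for i i'
  proof (cases "i = i'")
    case True
    then show ?thesis using X2[OF i] by (simp add: power2_eq_square)
  next
    case False
    have "indep_vars (\<lambda>_. borel) X (insert i {i'})" by (rule indep_vars_subset[OF indX]) (use i i' in auto)
    then have "indep_var borel (X i) borel (\<lambda>\<omega>. \<Sum>j\<in>{i'}. X j \<omega>)"
      by (rule indep_vars_sum[rotated 2]) (use False in auto)
    then have iv: "indep_var borel (X i) borel (X i')" by simp
    show ?thesis using indep_var_lebesgue_integral[OF iv] indep_var_integrable[OF iv] X1[OF i] X1[OF i'] False
      by (simp add: power2_eq_square)
  qed
  have Nr: "real N > 0" using N by auto
  have cardN: "card {1..N} = N" by simp
  have ch_eq: "(\<lambda>\<omega>. (\<Sum>i=1..N. \<phi> (Y i \<omega>)) / real N) = (\<lambda>\<omega>. (\<Sum>i=1..N. X i \<omega>) / real N)"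
    unfolding X_def ..
  have sq_eq: "(\<lambda>\<omega>. ((\<Sum>i=1..N. \<phi> (Y i \<omega>)) / real N)\<^sup>2) = (\<lambda>\<omega>. (\<Sum>i=1..N. \<Sum>i'=1..N. X i \<omega> * X i' \<omega>) / (real N)\<^sup>2)"
    unfolding X_def by (rule ext) (simp add: power_divide power2_eq_square sum_product)
  show "integrable P (\<lambda>\<omega>. (\<Sum>i=1..N. \<phi> (Y i \<omega>)) / real N)"
    unfolding ch_eq using X1 by (intro integrable_divide Bochner_Integration.integrable_sum) auto
  show "integrable P (\<lambda>\<omega>. ((\<Sum>i=1..N. \<phi> (Y i \<omega>)) / real N)\<^sup>2)"
    unfolding sq_eq using Xprod by (intro integrable_divide Bochner_Integration.integrable_sum) auto
  show "expectation (\<lambda>\<omega>. (\<Sum>i=1..N. \<phi> (Y i \<omega>)) / real N) = (LINT y|Mv. f y * \<phi> y)"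
  proof -
    have "expectation (\<lambda>\<omega>. (\<Sum>i=1..N. X i \<omega>) / real N) = (\<Sum>i=1..N. expectation (X i)) / real N"
      using X1 by (subst integral_divide_zero, subst Bochner_Integration.integral_sum) auto
    also have "\<dots> = (\<Sum>i=1..N. m1) / real N" using X1 by (intro arg_cong[where f="\<lambda>x. x / real N"] sum.cong) auto
    also have "\<dots> = m1" using Nr by simp
    finally show ?thesis unfolding ch_eq m1_def .
  qed
  show "expectation (\<lambda>\<omega>. ((\<Sum>i=1..N. \<phi> (Y i \<omega>)) / real N)\<^sup>2) =
          (LINT y|Mv. f y * \<phi> y)\<^sup>2 + ((LINT y|Mv. f y * (\<phi> y)\<^sup>2) - (LINT y|Mv. f y * \<phi> y)\<^sup>2) / real N"
  proof -
    have "expectation (\<lambda>\<omega>. (\<Sum>i=1..N. \<Sum>i'=1..N. X i \<omega> * X i' \<omega>) / (real N)\<^sup>2) =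
        (\<Sum>i=1..N. \<Sum>i'=1..N. expectation (\<lambda>\<omega>. X i \<omega> * X i' \<omega>)) / (real N)\<^sup>2"
      using Xprod by (subst integral_divide_zero, subst Bochner_Integration.integral_sum)
         (auto intro!: Bochner_Integration.integrable_sum Bochner_Integration.integral_sum sum.cong)
    also have "\<dots> = (\<Sum>i=1..N. \<Sum>i'=1..N. m1\<^sup>2 + (if i = i' then m2 - m1\<^sup>2 else 0)) / (real N)\<^sup>2"
      using Xprod by (intro arg_cong[where f="\<lambda>x. x / (real N)\<^sup>2"] sum.cong refl) auto
    also have "\<dots> = (\<Sum>i=1..N. real N * m1\<^sup>2 + (m2 - m1\<^sup>2)) / (real N)\<^sup>2"
      by (intro arg_cong[where f="\<lambda>x. x / (real N)\<^sup>2"] sum.cong refl) (simp add: sum.distrib)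
    also have "\<dots> = (real N * (real N * m1\<^sup>2 + (m2 - m1\<^sup>2))) / (real N)\<^sup>2" by simp
    also have "\<dots> = m1\<^sup>2 + (m2 - m1\<^sup>2) / real N" using Nr by (simp add: field_simps power2_eq_square)
    finally show ?thesis unfolding sq_eq m1_def m2_def .
  qed
qed

context
  fixes Mv :: "'a measure" and q :: "'a \<Rightarrow> real" and \<psi> :: "nat \<Rightarrow> 'a \<Rightarrow> real"
  assumes q_meas[measurable]: "q \<in> borel_measurable Mv"
    and q_pos: "\<forall>y\<in>space Mv. q y > 0"
    and onb: "complete_orthonormal Mv q \<psi>"
begin

lemma q_nn: "\<forall>y\<in>space Mv. q y \<ge> 0" using q_pos by (auto intro: less_imp_le)

lemma psi_meas: "k \<ge> 1 \<Longrightarrow> \<psi> k \<in> borel_measurable Mv"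
  using onb unfolding complete_orthonormal_def by auto

lemma ortho_int: "k \<ge> 1 \<Longrightarrow> l \<ge> 1 \<Longrightarrow> integrable Mv (\<lambda>y. \<psi> k y * \<psi> l y * q y)"
  using onb unfolding complete_orthonormal_def by auto

lemma ortho_val: "k \<ge> 1 \<Longrightarrow> l \<ge> 1 \<Longrightarrow> (LINT y|Mv. \<psi> k y * \<psi> l y * q y) = (if k = l then 1 else 0)"
  using onb unfolding complete_orthonormal_def by auto

lemma psi_sq_int: "k \<ge> 1 \<Longrightarrow> integrable Mv (\<lambda>y. (\<psi> k y)\<^sup>2 * q y)"
  using ortho_int[of k k] by (simp add: power2_eq_square)

lemma psi_sq_val: "k \<ge> 1 \<Longrightarrow> (LINT y|Mv. (\<psi> k y)\<^sup>2 * q y) = 1"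
  using ortho_val[of k k] by (simp add: power2_eq_square)

lemma sum_meas:
  assumes "\<forall>k\<in>F. k \<ge> 1"
  shows "(\<lambda>y. \<Sum>k\<in>F. a k * \<psi> k y) \<in> borel_measurable Mv"
proof (rule borel_measurable_sum)
  fix k assume "k \<in> F"
  then have [measurable]: "\<psi> k \<in> borel_measurable Mv" using assms psi_meas by auto
  show "(\<lambda>y. a k * \<psi> k y) \<in> borel_measurable Mv" by measurable
qed

lemma fin_norm:
  assumes F: "finite F" "\<forall>k\<in>F. k \<ge> 1"
  shows "integrable Mv (\<lambda>y. (\<Sum>k\<in>F. a k * \<psi> k y)\<^sup>2 * q y)"
    and "(LINT y|Mv. (\<Sum>k\<in>F. a k * \<psi> k y)\<^sup>2 * q y) = (\<Sum>k\<in>F. (a k)\<^sup>2)"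
proof -
  have eq: "(\<lambda>y. (\<Sum>k\<in>F. a k * \<psi> k y)\<^sup>2 * q y) =
      (\<lambda>y. \<Sum>k\<in>F. \<Sum>l\<in>F. a k * a l * (\<psi> k y * \<psi> l y * q y))"
  proof (rule ext)
    fix y
    have "(\<Sum>k\<in>F. a k * \<psi> k y)\<^sup>2 * q y = (\<Sum>k\<in>F. \<Sum>l\<in>F. (a k * \<psi> k y) * (a l * \<psi> l y)) * q y"
      by (simp only: power2_eq_square sum_product)
    also have "\<dots> = (\<Sum>k\<in>F. \<Sum>l\<in>F. (a k * \<psi> k y) * (a l * \<psi> l y) * q y)"
      by (simp only: sum_distrib_right)
    also have "\<dots> = (\<Sum>k\<in>F. \<Sum>l\<in>F. a k * a l * (\<psi> k y * \<psi> l y * q y))"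
      by (intro sum.cong refl) (simp add: mult_ac)
    finally show "(\<Sum>k\<in>F. a k * \<psi> k y)\<^sup>2 * q y = (\<Sum>k\<in>F. \<Sum>l\<in>F. a k * a l * (\<psi> k y * \<psi> l y * q y))" .
  qed
  have ii: "\<And>k l. k \<in> F \<Longrightarrow> l \<in> F \<Longrightarrow> integrable Mv (\<lambda>y. a k * a l * (\<psi> k y * \<psi> l y * q y))"
    using F ortho_int by auto
  show "integrable Mv (\<lambda>y. (\<Sum>k\<in>F. a k * \<psi> k y)\<^sup>2 * q y)"
    unfolding eq using ii by (intro Bochner_Integration.integrable_sum) auto
  have "(LINT y|Mv. (\<Sum>k\<in>F. a k * \<psi> k y)\<^sup>2 * q y) =
      (\<Sum>k\<in>F. \<Sum>l\<in>F. a k * a l * (LINT y|Mv. \<psi> k y * \<psi> l y * q y))"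
  proof -
    have "(LINT y|Mv. (\<Sum>k\<in>F. \<Sum>l\<in>F. a k * a l * (\<psi> k y * \<psi> l y * q y))) =
      (\<Sum>k\<in>F. LINT y|Mv. (\<Sum>l\<in>F. a k * a l * (\<psi> k y * \<psi> l y * q y)))"
      by (rule Bochner_Integration.integral_sum) (use ii in \<open>auto intro!: Bochner_Integration.integrable_sum\<close>)
    also have "\<dots> = (\<Sum>k\<in>F. \<Sum>l\<in>F. LINT y|Mv. a k * a l * (\<psi> k y * \<psi> l y * q y))"
      by (intro sum.cong refl Bochner_Integration.integral_sum) (use ii in auto)
    finally show ?thesis unfolding eq by simp
  qed
  also have "\<dots> = (\<Sum>k\<in>F. \<Sum>l\<in>F. a k * a l * (if k = l then 1 else 0))"
    using F ortho_val by (intro sum.cong refl) auto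
  also have "\<dots> = (\<Sum>k\<in>F. (a k)\<^sup>2)"
    using F by (simp add: power2_eq_square if_distrib sum.If_cases cong: if_cong)
  finally show "(LINT y|Mv. (\<Sum>k\<in>F. a k * \<psi> k y)\<^sup>2 * q y) = (\<Sum>k\<in>F. (a k)\<^sup>2)" .
qed

lemma fin_coef:
  assumes F: "finite F" "\<forall>k\<in>F. k \<ge> 1" and l: "l \<ge> 1"
  shows "integrable Mv (\<lambda>y. (\<Sum>k\<in>F. a k * \<psi> k y) * \<psi> l y * q y)"
    and "(LINT y|Mv. (\<Sum>k\<in>F. a k * \<psi> k y) * \<psi> l y * q y) = (if l \<in> F then a l else 0)"
proof -
  have eq: "(\<lambda>y. (\<Sum>k\<in>F. a k * \<psi> k y) * \<psi> l y * q y) =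
      (\<lambda>y. \<Sum>k\<in>F. a k * (\<psi> k y * \<psi> l y * q y))"
  proof (rule ext)
    fix y
    have "(\<Sum>k\<in>F. a k * \<psi> k y) * \<psi> l y * q y = (\<Sum>k\<in>F. a k * \<psi> k y * \<psi> l y * q y)"
      by (simp only: sum_distrib_right)
    also have "\<dots> = (\<Sum>k\<in>F. a k * (\<psi> k y * \<psi> l y * q y))"
      by (intro sum.cong refl) (simp add: mult_ac)
    finally show "(\<Sum>k\<in>F. a k * \<psi> k y) * \<psi> l y * q y = (\<Sum>k\<in>F. a k * (\<psi> k y * \<psi> l y * q y))" .
  qed
  have ii: "\<And>k. k \<in> F \<Longrightarrow> integrable Mv (\<lambda>y. a k * (\<psi> k y * \<psi> l y * q y))"
    using F l ortho_int by auto
  show "integrable Mv (\<lambda>y. (\<Sum>k\<in>F. a k * \<psi> k y) * \<psi> l y * q y)"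
    unfolding eq using ii by (intro Bochner_Integration.integrable_sum) auto
  have "(LINT y|Mv. (\<Sum>k\<in>F. a k * \<psi> k y) * \<psi> l y * q y) =
      (\<Sum>k\<in>F. a k * (LINT y|Mv. \<psi> k y * \<psi> l y * q y))"
    unfolding eq using ii by (subst Bochner_Integration.integral_sum) auto
  also have "\<dots> = (\<Sum>k\<in>F. a k * (if k = l then 1 else 0))"
    using F l ortho_val by (intro sum.cong refl) auto
  also have "\<dots> = (if l \<in> F then a l else 0)"
    using F by (simp add: if_distrib sum.If_cases cong: if_cong)
  finally show "(LINT y|Mv. (\<Sum>k\<in>F. a k * \<psi> k y) * \<psi> l y * q y) = (if l \<in> F then a l else 0)" .
qed

lemma gen_expand:
  assumes g[measurable]: "g \<in> borel_measurable Mv" and ig: "integrable Mv (\<lambda>y. (g y)\<^sup>2 * q y)"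
    and F: "finite F" "\<forall>k\<in>F. k \<ge> 1"
  shows "integrable Mv (\<lambda>y. (g y - (\<Sum>k\<in>F. a k * \<psi> k y))\<^sup>2 * q y)"
    and "(LINT y|Mv. (g y - (\<Sum>k\<in>F. a k * \<psi> k y))\<^sup>2 * q y) =
         (LINT y|Mv. (g y)\<^sup>2 * q y) - 2 * (\<Sum>k\<in>F. a k * (LINT y|Mv. g y * \<psi> k y * q y)) + (\<Sum>k\<in>F. (a k)\<^sup>2)"
proof -
  define T where "T y = (\<Sum>k\<in>F. a k * \<psi> k y)" for y
  have [measurable]: "T \<in> borel_measurable Mv" unfolding T_def using sum_meas F by auto
  have iT: "integrable Mv (\<lambda>y. (T y)\<^sup>2 * q y)" unfolding T_def using fin_norm(1) F by auto
  have vT: "(LINT y|Mv. (T y)\<^sup>2 * q y) = (\<Sum>k\<in>F. (a k)\<^sup>2)" unfolding T_def using fin_norm(2) F by auto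
  have igT: "integrable Mv (\<lambda>y. g y * T y * q y)" by (rule int_prod) (use ig iT q_nn in auto)
  have igp: "integrable Mv (\<lambda>y. g y * \<psi> k y * q y)" if "k \<in> F" for k
  proof -
    have [measurable]: "\<psi> k \<in> borel_measurable Mv" using psi_meas F that by auto
    show ?thesis by (rule int_prod) (use ig psi_sq_int F that q_nn in auto)
  qed
  have eqT: "(\<lambda>y. g y * T y * q y) = (\<lambda>y. \<Sum>k\<in>F. a k * (g y * \<psi> k y * q y))"
  proof (rule ext)
    fix y
    have "g y * T y * q y = (\<Sum>k\<in>F. g y * (a k * \<psi> k y) * q y)"
      unfolding T_def by (simp only: sum_distrib_left sum_distrib_right)
    also have "\<dots> = (\<Sum>k\<in>F. a k * (g y * \<psi> k y * q y))" by (intro sum.cong refl) (simp add: mult_ac)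
    finally show "g y * T y * q y = (\<Sum>k\<in>F. a k * (g y * \<psi> k y * q y))" .
  qed
  have vgT: "(LINT y|Mv. g y * T y * q y) = (\<Sum>k\<in>F. a k * (LINT y|Mv. g y * \<psi> k y * q y))"
    unfolding eqT using igp by (subst Bochner_Integration.integral_sum) auto
  have eq: "(\<lambda>y. (g y - T y)\<^sup>2 * q y) = (\<lambda>y. ((g y)\<^sup>2 * q y - 2 * (g y * T y * q y)) + (T y)\<^sup>2 * q y)"
    by (rule ext) (simp add: power2_diff algebra_simps)
  show "integrable Mv (\<lambda>y. (g y - (\<Sum>k\<in>F. a k * \<psi> k y))\<^sup>2 * q y)"
    using ig igT iT unfolding T_def[symmetric] eq by auto
  show "(LINT y|Mv. (g y - (\<Sum>k\<in>F. a k * \<psi> k y))\<^sup>2 * q y) =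
         (LINT y|Mv. (g y)\<^sup>2 * q y) - 2 * (\<Sum>k\<in>F. a k * (LINT y|Mv. g y * \<psi> k y * q y)) + (\<Sum>k\<in>F. (a k)\<^sup>2)"
    unfolding T_def[symmetric] eq using ig igT iT vT vgT by simp
qed

lemma parseval_le:
  assumes g[measurable]: "g \<in> borel_measurable Mv" and ig: "integrable Mv (\<lambda>y. (g y)\<^sup>2 * q y)"
    and summ: "summable (\<lambda>k. (LINT y|Mv. g y * \<psi> (Suc k) y * q y)\<^sup>2)"
  shows "(LINT y|Mv. (g y)\<^sup>2 * q y) \<le> (\<Sum>k. (LINT y|Mv. g y * \<psi> (Suc k) y * q y)\<^sup>2)"
proof -
  define c where "c k = (LINT y|Mv. g y * \<psi> k y * q y)" for k
  define L where "L = (\<Sum>k. (c (Suc k))\<^sup>2)"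
  define P where "P n = (\<Sum>k=1..n. (c k)\<^sup>2)" for n
  define T where "T n = (\<lambda>y. \<Sum>k=1..n. c k * \<psi> k y)" for n
  have summ': "summable (\<lambda>k. (c (Suc k))\<^sup>2)" using summ unfolding c_def .
  have P_alt: "P n = (\<Sum>k<n. (c (Suc k))\<^sup>2)" for n
    unfolding P_def One_nat_def sum.atLeast1_atMost_eq ..
  have P_lim: "P \<longlonglongrightarrow> L" unfolding P_alt L_def using summable_LIMSEQ[OF summ'] by simp
  have P_le: "P n \<le> L" for n unfolding P_alt L_def by (rule sum_le_suminf[OF summ']) auto
  have P_mono: "m \<le> n \<Longrightarrow> P m \<le> P n" for m n unfolding P_def by (rule sum_mono2) auto
  have T_meas[measurable]: "T n \<in> borel_measurable Mv" for n unfolding T_def by (rule sum_meas) auto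
  have split: "{1..m} = {1..n} \<union> {n<..m}" if "n \<le> m" for n m :: nat using that by auto
  have T_diff: "T m y - T n y = (\<Sum>k\<in>{n<..m}. c k * \<psi> k y)" if "n \<le> m" for n m y
    unfolding T_def split[OF that] by (subst sum.union_disjoint) auto
  have P_diff: "P m - P n = (\<Sum>k\<in>{n<..m}. (c k)\<^sup>2)" if "n \<le> m" for n m
    unfolding P_def split[OF that] by (subst sum.union_disjoint) auto
  have diff_int: "integrable Mv (\<lambda>y. (T m y - T n y)\<^sup>2 * q y)"
    and diff_val: "(LINT y|Mv. (T m y - T n y)\<^sup>2 * q y) = P m - P n" if "n \<le> m" for n m
    unfolding T_diff[OF that] P_diff[OF that] using fin_norm[of "{n<..m}" c] by auto
  have "\<forall>j. \<exists>N. L - P N \<le> (1/8)^j"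
  proof
    fix j :: nat
    obtain N where "\<forall>n\<ge>N. norm (P n - L) < (1/8)^j" using LIMSEQ_D[OF P_lim, of "(1/8)^j"] by auto
    then show "\<exists>N. L - P N \<le> (1/8)^j" by (intro exI[of _ N]) auto
  qed
  then obtain m where m: "\<And>j. L - P (m j) \<le> (1/8)^j" by metis
  define n where "n j = (\<Sum>i\<le>j. m i) + j" for j
  have n_ge_m: "m j \<le> n j" for j unfolding n_def using member_le_sum[of j "{..j}" m] by auto
  have n_ge: "j \<le> n j" for j unfolding n_def by auto
  have n_inc: "incseq n" by (rule incseq_SucI) (simp add: n_def)
  have n_mono: "i \<le> j \<Longrightarrow> n i \<le> n j" for i j using n_inc by (simp add: incseq_def)
  have tail: "L - P (n j) \<le> (1/8)^j" for j using m[of j] P_mono[OF n_ge_m[of j]] by linarith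
  define B where "B j y = T (n (Suc j)) y - T (n j) y" for j y
  have B_meas[measurable]: "(\<lambda>y. B j y) \<in> borel_measurable Mv" for j unfolding B_def by measurable
  have B_int: "integrable Mv (\<lambda>y. (B j y)\<^sup>2 * q y)" for j
    unfolding B_def by (rule diff_int) (rule n_mono, simp)
  have B_val: "(LINT y|Mv. (B j y)\<^sup>2 * q y) \<le> (1/8)^j" for j
  proof -
    have "(LINT y|Mv. (B j y)\<^sup>2 * q y) = P (n (Suc j)) - P (n j)"
      unfolding B_def by (rule diff_val) (rule n_mono, simp)
    then show ?thesis using P_le[of "n (Suc j)"] tail[of j] by linarith
  qed
  define H where "H j y = ennreal (4^j * ((B j y)\<^sup>2 * q y))" for j y
  have H_meas[measurable]: "(\<lambda>y. H j y) \<in> borel_measurable Mv" for j unfolding H_def by measurable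
  have "(\<integral>\<^sup>+y. (\<Sum>j. H j y) \<partial>Mv) = (\<Sum>j. \<integral>\<^sup>+y. H j y \<partial>Mv)"
    by (rule nn_integral_suminf) measurable
  also have "\<dots> \<le> (\<Sum>j. ennreal ((1/2)^j))"
  proof (rule suminf_le)
    fix j :: nat
    have "(\<integral>\<^sup>+y. H j y \<partial>Mv) = ennreal (LINT y|Mv. 4^j * ((B j y)\<^sup>2 * q y))"
      unfolding H_def using B_int q_nn by (intro nn_integral_eq_integral) auto
    also have "\<dots> = ennreal (4^j * (LINT y|Mv. (B j y)\<^sup>2 * q y))" by simp
    also have "\<dots> \<le> ennreal (4^j * (1/8)^j)"
      using B_val[of j] by (intro ennreal_leI mult_left_mono) auto
    also have "4^j * (1/8)^j = ((1/2)^j :: real)" by (simp add: power_mult_distrib[symmetric])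
    finally show "(\<integral>\<^sup>+y. H j y \<partial>Mv) \<le> ennreal ((1/2)^j)" .
  qed auto
  also have "\<dots> = ennreal 2"
    using suminf_geometric[of "1/2::real"] by (subst suminf_ennreal2) auto
  finally have "(\<integral>\<^sup>+y. (\<Sum>j. H j y) \<partial>Mv) \<noteq> \<infinity>" by (auto simp: top_unique)
  then have AEfin: "AE y in Mv. (\<Sum>j. H j y) \<noteq> \<infinity>" by (intro nn_integral_PInf_AE) measurable
  have AEsum: "AE y in Mv. summable (\<lambda>j. B j y)"
    using AEfin AE_space
  proof eventually_elim
    fix y assume fin: "(\<Sum>j. H j y) \<noteq> \<infinity>" and y: "y \<in> space Mv"
    have qy: "q y > 0" using q_pos y by auto
    have "summable (\<lambda>j. 4^j * ((B j y)\<^sup>2 * q y))"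
      using fin qy unfolding H_def by (intro summable_suminf_not_top) auto
    then have "summable (\<lambda>j. 4^j * ((B j y)\<^sup>2 * q y) / q y)" by (rule summable_divide)
    then have s4: "summable (\<lambda>j. 4^j * (B j y)\<^sup>2)" using qy by simp
    have "summable (\<lambda>j. (1/2::real)^j + 4^j * (B j y)\<^sup>2)"
      by (intro summable_add s4 summable_geometric) auto
    then show "summable (\<lambda>j. B j y)"
      by (rule summable_comparison_test[rotated]) (auto intro: pow_bound)
  qed
  have Tn_eq: "T (n J) y = T (n 0) y + (\<Sum>j<J. B j y)" for J y
    unfolding B_def using sum_lessThan_telescope[of "\<lambda>j. T (n j) y" J] by linarith
  define h where "h y = lim (\<lambda>J. T (n J) y)" for y
  have h_meas[measurable]: "h \<in> borel_measurable Mv" unfolding h_def by measurable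
  have hconv: "AE y in Mv. (\<lambda>J. T (n J) y) \<longlonglongrightarrow> h y"
    using AEsum
  proof eventually_elim
    fix y assume "summable (\<lambda>j. B j y)"
    then have "(\<lambda>J. T (n 0) y + (\<Sum>j<J. B j y)) \<longlonglongrightarrow> T (n 0) y + (\<Sum>j. B j y)"
      by (intro tendsto_add tendsto_const summable_LIMSEQ)
    moreover have "(\<lambda>J. T (n J) y) = (\<lambda>J. T (n 0) y + (\<Sum>j<J. B j y))" by (rule ext) (rule Tn_eq)
    ultimately have "convergent (\<lambda>J. T (n J) y)" unfolding convergent_def by auto
    then show "(\<lambda>J. T (n J) y) \<longlonglongrightarrow> h y" unfolding h_def by (simp add: convergent_LIMSEQ_iff)
  qed
  have hJ: "integrable Mv (\<lambda>y. (h y - T (n J) y)\<^sup>2 * q y) \<and> (LINT y|Mv. (h y - T (n J) y)\<^sup>2 * q y) \<le> (1/8)^J" for J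
  proof -
    have conv: "AE y in Mv. (\<lambda>m. T (n m) y - T (n J) y) \<longlonglongrightarrow> h y - T (n J) y"
      using hconv by eventually_elim (intro tendsto_diff tendsto_const)
    have bnd: "integrable Mv (\<lambda>y. (T (n m) y - T (n J) y)\<^sup>2 * q y) \<and> (LINT y|Mv. (T (n m) y - T (n J) y)\<^sup>2 * q y) \<le> (1/8)^J"
      if "m \<ge> J" for m
    proof -
      have nm: "n J \<le> n m" using n_mono[OF that] .
      show ?thesis using diff_int[OF nm] diff_val[OF nm] P_le[of "n m"] tail[of J] by auto
    qed
    show ?thesis
      using fatou_L2[where F="\<lambda>m y. T (n m) y - T (n J) y" and G="\<lambda>y. h y - T (n J) y" and M=Mv and q=q and mst=J and C="(1/8)^J"]
        conv bnd q_nn by auto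
  qed
  have ih: "integrable Mv (\<lambda>y. (h y)\<^sup>2 * q y)" and ih_le: "(LINT y|Mv. (h y)\<^sup>2 * q y) \<le> L"
  proof -
    have bnd: "integrable Mv (\<lambda>y. (T (n m) y)\<^sup>2 * q y) \<and> (LINT y|Mv. (T (n m) y)\<^sup>2 * q y) \<le> L" if "m \<ge> 0" for m
      using fin_norm[of "{1..n m}" c] P_le[of "n m"] unfolding T_def P_def by auto
    show "integrable Mv (\<lambda>y. (h y)\<^sup>2 * q y)" "(LINT y|Mv. (h y)\<^sup>2 * q y) \<le> L"
      using fatou_L2[where F="\<lambda>m y. T (n m) y" and G="h" and M=Mv and q=q and mst=0 and C=L]
        hconv bnd q_nn by auto
  qed
  have hcoef: "(LINT y|Mv. h y * \<psi> k y * q y) = c k" if k: "k \<ge> 1" for k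
  proof -
    have [measurable]: "\<psi> k \<in> borel_measurable Mv" using psi_meas k by auto
    have close: "\<bar>(LINT y|Mv. h y * \<psi> k y * q y) - c k\<bar> \<le> (1/2)^J" if J: "J \<ge> k" for J
    proof -
      have i1: "integrable Mv (\<lambda>y. (h y - T (n J) y) * \<psi> k y * q y)"
        by (rule int_prod) (use hJ[of J] psi_sq_int[OF k] q_nn in auto)
      have i2: "integrable Mv (\<lambda>y. T (n J) y * \<psi> k y * q y)"
        unfolding T_def using fin_coef(1)[of "{1..n J}" k c] k by auto
      have v2: "(LINT y|Mv. T (n J) y * \<psi> k y * q y) = c k"
        unfolding T_def using fin_coef(2)[of "{1..n J}" k c] k J n_ge[of J] by auto
      have eq: "(\<lambda>y. h y * \<psi> k y * q y) = (\<lambda>y. (h y - T (n J) y) * \<psi> k y * q y + T (n J) y * \<psi> k y * q y)"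
        by (rule ext) (simp add: algebra_simps)
      have "(LINT y|Mv. h y * \<psi> k y * q y) - c k = (LINT y|Mv. (h y - T (n J) y) * \<psi> k y * q y)"
        unfolding eq using i1 i2 v2 by simp
      also have "\<bar>\<dots>\<bar> \<le> (2^J * (LINT y|Mv. (h y - T (n J) y)\<^sup>2 * q y) + (LINT y|Mv. (\<psi> k y)\<^sup>2 * q y) / 2^J) / 2"
        by (rule amgm_int) (use hJ[of J] psi_sq_int[OF k] q_nn in auto)
      also have "\<dots> \<le> (2^J * (1/8)^J + 1 / 2^J) / 2"
        using hJ[of J] psi_sq_val[OF k] by (auto intro!: divide_right_mono add_right_mono mult_left_mono)
      also have "\<dots> \<le> (1/2)^J"
      proof -
        have a: "(2::real)^J * (1/8)^J = (1/4)^J" by (simp add: power_mult_distrib[symmetric])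
        have b: "(1::real) / 2^J = (1/2)^J" by (simp add: power_divide)
        have "(1/4::real)^J \<le> (1/2)^J" by (rule power_mono) auto
        then show ?thesis unfolding a b by simp
      qed
      finally show ?thesis .
    qed
    show ?thesis
    proof (rule ccontr)
      assume ne: "(LINT y|Mv. h y * \<psi> k y * q y) \<noteq> c k"
      then have d: "\<bar>(LINT y|Mv. h y * \<psi> k y * q y) - c k\<bar> > 0" by auto
      obtain J0 where J0: "(1/2::real)^J0 < \<bar>(LINT y|Mv. h y * \<psi> k y * q y) - c k\<bar>"
        using real_arch_pow_inv[OF d, of "1/2"] by auto
      have "(1/2::real)^(max J0 k) \<le> (1/2)^J0" by (rule power_decreasing) auto
      with close[of "max J0 k"] J0 show False by auto
    qed
  qed
  have igh: "integrable Mv (\<lambda>y. g y * h y * q y)" by (rule int_prod) (use ig ih q_nn in auto)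
  have L2gh: "L2w Mv q (\<lambda>y. g y - h y)"
  proof -
    have eq: "(\<lambda>y. (g y - h y)\<^sup>2 * q y) = (\<lambda>y. (g y)\<^sup>2 * q y - 2 * (g y * h y * q y) + (h y)\<^sup>2 * q y)"
      by (rule ext) (simp add: power2_diff algebra_simps)
    show ?thesis unfolding L2w_def eq using ig igh ih by auto
  qed
  have orth: "\<forall>k\<ge>1. (LINT y|Mv. (g y - h y) * \<psi> k y * q y) = 0"
  proof (intro allI impI)
    fix k :: nat assume k: "k \<ge> 1"
    have [measurable]: "\<psi> k \<in> borel_measurable Mv" using psi_meas k by auto
    have i1: "integrable Mv (\<lambda>y. g y * \<psi> k y * q y)"
      by (rule int_prod) (use ig psi_sq_int[OF k] q_nn in auto)
    have i2: "integrable Mv (\<lambda>y. h y * \<psi> k y * q y)"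
      by (rule int_prod) (use ih psi_sq_int[OF k] q_nn in auto)
    have eq: "(\<lambda>y. (g y - h y) * \<psi> k y * q y) = (\<lambda>y. g y * \<psi> k y * q y - h y * \<psi> k y * q y)"
      by (rule ext) (simp add: algebra_simps)
    show "(LINT y|Mv. (g y - h y) * \<psi> k y * q y) = 0"
      unfolding eq using i1 i2 hcoef[OF k] by (simp add: c_def)
  qed
  have "AE y in Mv. g y - h y = 0"
    using onb L2gh orth unfolding complete_orthonormal_def by blast
  then have "AE y in Mv. (g y)\<^sup>2 * q y = (h y)\<^sup>2 * q y" by eventually_elim simp
  then have "(LINT y|Mv. (g y)\<^sup>2 * q y) = (LINT y|Mv. (h y)\<^sup>2 * q y)"
    by (intro integral_cong_AE) measurable
  also have "\<dots> \<le> L" by (rule ih_le)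
  finally show ?thesis unfolding L_def c_def .
qed

lemma density_facts:
  fixes f :: "'a \<Rightarrow> real" and lam :: "nat \<Rightarrow> real"
  assumes dens: "prob_density Mv f" and inH: "in_RKHS Mv q \<psi> lam f"
    and lam_pos: "\<forall>k\<ge>1. lam k > 0" and lam_HS: "summable (\<lambda>k. (lam (Suc k))\<^sup>2)"
  shows "summable (\<lambda>k. (coef Mv \<psi> f (Suc k))\<^sup>2)"
    and "(LINT y|Mv. (f y)\<^sup>2 * inverse (q y)) \<le> (\<Sum>k. (coef Mv \<psi> f (Suc k))\<^sup>2)"
    and "(LINT y|Mv. (f y - (\<Sum>k=1..K. a k * \<psi> k y * q y))\<^sup>2 * inverse (q y)) =
         (LINT y|Mv. (f y)\<^sup>2 * inverse (q y)) - 2 * (\<Sum>k=1..K. a k * coef Mv \<psi> f k) + (\<Sum>k=1..K. (a k)\<^sup>2)"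
proof -
  have fm[measurable]: "f \<in> borel_measurable Mv" using dens unfolding prob_density_def by auto
  have if2: "integrable Mv (\<lambda>y. (f y)\<^sup>2 * inverse (q y))" using inH unfolding in_RKHS_def L2w_def by auto
  define g where "g y = f y / q y" for y
  have gm[measurable]: "g \<in> borel_measurable Mv" unfolding g_def by measurable
  have gq: "(g y)\<^sup>2 * q y = (f y)\<^sup>2 * inverse (q y)" if "y \<in> space Mv" for y
    using q_pos that unfolding g_def by (auto simp: field_simps power2_eq_square)
  have ig: "integrable Mv (\<lambda>y. (g y)\<^sup>2 * q y)" using if2 by (subst Bochner_Integration.integrable_cong[OF refl gq]) auto
  have vg: "(LINT y|Mv. (g y)\<^sup>2 * q y) = (LINT y|Mv. (f y)\<^sup>2 * inverse (q y))"
    by (rule Bochner_Integration.integral_cong[OF refl gq])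
  have gcoef: "(LINT y|Mv. g y * \<psi> k y * q y) = coef Mv \<psi> f k" for k
    unfolding coef_def g_def by (rule Bochner_Integration.integral_cong) (use q_pos in \<open>auto simp: field_simps\<close>)
  show summ: "summable (\<lambda>k. (coef Mv \<psi> f (Suc k))\<^sup>2)"
  proof (rule summable_comparison_test_ev)
    show "summable (\<lambda>k. (coef Mv \<psi> f (Suc k))\<^sup>2 / lam (Suc k))" using inH unfolding in_RKHS_def by auto
    have "(\<lambda>k. (lam (Suc k))\<^sup>2) \<longlonglongrightarrow> 0" by (rule summable_LIMSEQ_zero[OF lam_HS])
    then have "eventually (\<lambda>k. (lam (Suc k))\<^sup>2 < 1) sequentially" by (rule order_tendstoD) simp
    then show "eventually (\<lambda>k. norm ((coef Mv \<psi> f (Suc k))\<^sup>2) \<le> (coef Mv \<psi> f (Suc k))\<^sup>2 / lam (Suc k)) sequentially"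
    proof eventually_elim
      fix k assume l1: "(lam (Suc k))\<^sup>2 < 1"
      have lp: "lam (Suc k) > 0" using lam_pos by auto
      have "lam (Suc k) \<le> 1" using l1 lp by (smt (verit) one_le_power power2_eq_square mult_le_cancel_left1)
      then have "(coef Mv \<psi> f (Suc k))\<^sup>2 * lam (Suc k) \<le> (coef Mv \<psi> f (Suc k))\<^sup>2"
        by (simp add: mult_left_le)
      then show "norm ((coef Mv \<psi> f (Suc k))\<^sup>2) \<le> (coef Mv \<psi> f (Suc k))\<^sup>2 / lam (Suc k)"
        using lp by (simp add: le_divide_eq)
    qed
  qed
  show "(LINT y|Mv. (f y)\<^sup>2 * inverse (q y)) \<le> (\<Sum>k. (coef Mv \<psi> f (Suc k))\<^sup>2)"
    using parseval_le[OF gm ig] summ unfolding gcoef vg by auto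
  have pt: "(f y - (\<Sum>k=1..K. a k * \<psi> k y * q y))\<^sup>2 * inverse (q y) = (g y - (\<Sum>k=1..K. a k * \<psi> k y))\<^sup>2 * q y"
    if y: "y \<in> space Mv" for y
  proof -
    have qy: "q y > 0" using q_pos y by auto
    have "(\<Sum>k=1..K. a k * \<psi> k y * q y) = (\<Sum>k=1..K. a k * \<psi> k y) * q y" by (simp add: sum_distrib_right)
    then show ?thesis using qy unfolding g_def by (simp add: field_simps power2_eq_square)
  qed
  have "(LINT y|Mv. (f y - (\<Sum>k=1..K. a k * \<psi> k y * q y))\<^sup>2 * inverse (q y)) =
        (LINT y|Mv. (g y - (\<Sum>k=1..K. a k * \<psi> k y))\<^sup>2 * q y)"
    by (rule Bochner_Integration.integral_cong[OF refl pt])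
  also have "\<dots> = (LINT y|Mv. (g y)\<^sup>2 * q y) - 2 * (\<Sum>k=1..K. a k * (LINT y|Mv. g y * \<psi> k y * q y)) + (\<Sum>k=1..K. (a k)\<^sup>2)"
    by (rule gen_expand(2)[OF gm ig]) auto
  finally show "(LINT y|Mv. (f y - (\<Sum>k=1..K. a k * \<psi> k y * q y))\<^sup>2 * inverse (q y)) =
         (LINT y|Mv. (f y)\<^sup>2 * inverse (q y)) - 2 * (\<Sum>k=1..K. a k * coef Mv \<psi> f k) + (\<Sum>k=1..K. (a k)\<^sup>2)"
    unfolding gcoef vg .
qed

end

theorem theorem1:
  fixes Mv :: "'a measure" and q :: "'a \<Rightarrow> real" and \<psi> :: "nat \<Rightarrow> 'a \<Rightarrow> real"
    and lam :: "nat \<Rightarrow> real" and \<theta> :: "nat \<Rightarrow> 't" and p :: "'t \<Rightarrow> 'a \<Rightarrow> real" and Mc :: nat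
  assumes q_meas: "q \<in> borel_measurable Mv"
    and q_pos: "\<forall>y\<in>space Mv. q y > 0"
    and onb: "complete_orthonormal Mv q \<psi>"
    and lam_pos: "\<forall>k\<ge>1. lam k > 0"
    and lam_HS: "summable (\<lambda>k. (lam (Suc k))\<^sup>2)"
    and dens: "\<forall>j\<in>{1..Mc}. prob_density Mv (p (\<theta> j))"
    and in_H: "\<forall>j\<in>{1..Mc}. in_RKHS Mv q \<psi> lam (p (\<theta> j))"
    and var_fin: "\<forall>j\<in>{1..Mc}. \<forall>k\<ge>1. integrable Mv (\<lambda>y. p (\<theta> j) y * (\<psi> k y)\<^sup>2)"
  shows "(\<forall>(N::nat) (K1::nat) (P::'w measure) Y.
           N \<ge> 1 \<and> K1 \<ge> 1 \<and> iid_samples P Mv Y N Mc (\<lambda>j. p (\<theta> j)) \<longrightarrow>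
             integrable P (e_L2 Mv \<psi> q (\<lambda>j. p (\<theta> j)) Mc Y N K1) \<and>
             integrable P (\<lambda>\<omega>. (e_L2 Mv \<psi> q (\<lambda>j. p (\<theta> j)) Mc Y N K1 \<omega>)\<^sup>2) \<and>
             prob_space.expectation P (e_L2 Mv \<psi> q (\<lambda>j. p (\<theta> j)) Mc Y N K1)
               \<le> sqrt (err_bound Mv \<psi> (\<lambda>j. p (\<theta> j)) Mc N K1) \<and>
             prob_space.variance P (e_L2 Mv \<psi> q (\<lambda>j. p (\<theta> j)) Mc Y N K1)
               \<le> err_bound Mv \<psi> (\<lambda>j. p (\<theta> j)) Mc N K1) \<and>
         (\<forall>\<epsilon>>0. \<exists>K1\<ge>(1::nat). \<exists>Nmin::nat. \<forall>N>Nmin. \<forall>(P::'w measure) Y.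
           iid_samples P Mv Y N Mc (\<lambda>j. p (\<theta> j)) \<longrightarrow>
             prob_space.expectation P (e_L2 Mv \<psi> q (\<lambda>j. p (\<theta> j)) Mc Y N K1) < \<epsilon> \<and>
             prob_space.variance P (e_L2 Mv \<psi> q (\<lambda>j. p (\<theta> j)) Mc Y N K1) < \<epsilon>)"
proof -
  note df1 = density_facts(1)[OF q_meas q_pos onb]
  note df2 = density_facts(2)[OF q_meas q_pos onb]
  note df3 = density_facts(3)[OF q_meas q_pos onb]
  define c where "c j k = coef Mv \<psi> (p (\<theta> j)) k" for j k
  define A where "A j = (LINT y|Mv. (p (\<theta> j) y)\<^sup>2 * inverse (q y))" for j
  define V where "V j k = var_psi Mv \<psi> (p (\<theta> j)) k" for j k
  define Tl where "Tl K = (\<Sum>j=1..Mc. \<Sum>k. (c j (k + K + 1))\<^sup>2)" for K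
  have err_eq: "err_bound Mv \<psi> (\<lambda>j. p (\<theta> j)) Mc N K = Tl K + (1 / real N) * (\<Sum>j=1..Mc. \<Sum>k=1..K. V j k)" for N K
    by (simp add: err_bound_def Tl_def c_def V_def)
  have summ: "summable (\<lambda>k. (c j (Suc k))\<^sup>2)" if j: "j \<in> {1..Mc}" for j
    unfolding c_def by (rule df1) (use dens in_H lam_pos lam_HS j in auto)
  have A_le: "A j \<le> (\<Sum>k. (c j (Suc k))\<^sup>2)" if j: "j \<in> {1..Mc}" for j
    unfolding c_def A_def by (rule df2) (use dens in_H lam_pos lam_HS j in auto)
  have A_tail: "A j - (\<Sum>k=1..K. (c j k)\<^sup>2) \<le> (\<Sum>k. (c j (k + K + 1))\<^sup>2)" if j: "j \<in> {1..Mc}" for j K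
  proof -
    have "(\<Sum>k. (c j (Suc k))\<^sup>2) = (\<Sum>k. (c j (Suc (k + K)))\<^sup>2) + (\<Sum>k<K. (c j (Suc k))\<^sup>2)"
      using suminf_split_initial_segment[OF summ[OF j], of K] by simp
    moreover have "(\<Sum>k<K. (c j (Suc k))\<^sup>2) = (\<Sum>k=1..K. (c j k)\<^sup>2)"
      unfolding One_nat_def sum.atLeast1_atMost_eq ..
    ultimately show ?thesis using A_le[OF j] by simp
  qed
  have part1: "\<forall>(N::nat) (K1::nat) (P::'w measure) Y.
           N \<ge> 1 \<and> K1 \<ge> 1 \<and> iid_samples P Mv Y N Mc (\<lambda>j. p (\<theta> j)) \<longrightarrow>
             integrable P (e_L2 Mv \<psi> q (\<lambda>j. p (\<theta> j)) Mc Y N K1) \<and>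
             integrable P (\<lambda>\<omega>. (e_L2 Mv \<psi> q (\<lambda>j. p (\<theta> j)) Mc Y N K1 \<omega>)\<^sup>2) \<and>
             prob_space.expectation P (e_L2 Mv \<psi> q (\<lambda>j. p (\<theta> j)) Mc Y N K1)
               \<le> sqrt (err_bound Mv \<psi> (\<lambda>j. p (\<theta> j)) Mc N K1) \<and>
             prob_space.variance P (e_L2 Mv \<psi> q (\<lambda>j. p (\<theta> j)) Mc Y N K1)
               \<le> err_bound Mv \<psi> (\<lambda>j. p (\<theta> j)) Mc N K1"
  proof (intro allI impI, elim conjE)
    fix N K1 :: nat and P :: "'w measure" and Y :: "nat \<Rightarrow> nat \<Rightarrow> 'w \<Rightarrow> 'a"
    assume N: "N \<ge> 1" and K: "K1 \<ge> 1" and iid: "iid_samples P Mv Y N Mc (\<lambda>j. p (\<theta> j))"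
    have ps: "prob_space P" using iid unfolding iid_samples_def by auto
    interpret prob_space P by fact
    show "integrable P (e_L2 Mv \<psi> q (\<lambda>j. p (\<theta> j)) Mc Y N K1) \<and>
             integrable P (\<lambda>\<omega>. (e_L2 Mv \<psi> q (\<lambda>j. p (\<theta> j)) Mc Y N K1 \<omega>)\<^sup>2) \<and>
             expectation (e_L2 Mv \<psi> q (\<lambda>j. p (\<theta> j)) Mc Y N K1)
               \<le> sqrt (err_bound Mv \<psi> (\<lambda>j. p (\<theta> j)) Mc N K1) \<and>
             variance (e_L2 Mv \<psi> q (\<lambda>j. p (\<theta> j)) Mc Y N K1)
               \<le> err_bound Mv \<psi> (\<lambda>j. p (\<theta> j)) Mc N K1"
    proof -
      define ch where "ch j k \<omega> = c_hat \<psi> Y N j k \<omega>" for j k \<omega>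
      have mom: "integrable P (ch j k) \<and> integrable P (\<lambda>\<omega>. (ch j k \<omega>)\<^sup>2) \<and>
          expectation (ch j k) = c j k \<and> expectation (\<lambda>\<omega>. (ch j k \<omega>)\<^sup>2) = (c j k)\<^sup>2 + V j k / real N"
        if j: "j \<in> {1..Mc}" and k: "k \<in> {1..K1}" for j k
      proof -
        have ind: "indep_vars (\<lambda>_. Mv) (\<lambda>i. Y i j) {1..N}"
          and dist: "\<forall>i\<in>{1..N}. distributed P Mv (Y i j) (\<lambda>y. ennreal (p (\<theta> j) y))"
          using iid j unfolding iid_samples_def by auto
        have pm: "\<psi> k \<in> borel_measurable Mv" using onb k unfolding complete_orthonormal_def by auto
        have fd: "prob_density Mv (p (\<theta> j))" using dens j by auto
        have fnn: "\<forall>y\<in>space Mv. 0 \<le> p (\<theta> j) y" and fi: "integrable Mv (p (\<theta> j))"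
          using fd unfolding prob_density_def by auto
        have f2: "integrable Mv (\<lambda>y. p (\<theta> j) y * (\<psi> k y)\<^sup>2)" using var_fin j k by auto
        note sm = sample_moments[OF ps ind dist N pm fnn fi f2]
        have cheq: "ch j k = (\<lambda>\<omega>. (\<Sum>i=1..N. \<psi> k (Y i j \<omega>)) / real N)"
          unfolding ch_def c_hat_def by (rule ext) simp
        show ?thesis unfolding cheq using sm
          by (simp add: c_def V_def var_psi_def coef_def)
      qed
      define Q where "Q \<omega> = (\<Sum>j=1..Mc. A j + (\<Sum>k=1..K1. (ch j k \<omega>)\<^sup>2 - 2 * c j k * ch j k \<omega>))" for \<omega>
      have Q_int_eq: "Q \<omega> = (\<Sum>j=1..Mc. LINT y|Mv. (p (\<theta> j) y - p_hat \<psi> q Y N K1 j y \<omega>)\<^sup>2 * inverse (q y))" for \<omega>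
        unfolding Q_def
      proof (rule sum.cong[OF refl])
        fix j assume j: "j \<in> {1..Mc}"
        have "(LINT y|Mv. (p (\<theta> j) y - p_hat \<psi> q Y N K1 j y \<omega>)\<^sup>2 * inverse (q y)) =
           A j - 2 * (\<Sum>k=1..K1. ch j k \<omega> * c j k) + (\<Sum>k=1..K1. (ch j k \<omega>)\<^sup>2)"
          unfolding p_hat_def A_def c_def ch_def
          by (rule df3) (use dens in_H lam_pos lam_HS j in auto)
        moreover have "(\<Sum>k=1..K1. (ch j k \<omega>)\<^sup>2 - 2 * c j k * ch j k \<omega>) =
            (\<Sum>k=1..K1. (ch j k \<omega>)\<^sup>2) - 2 * (\<Sum>k=1..K1. ch j k \<omega> * c j k)"
          by (simp add: sum_subtractf sum_distrib_left mult_ac)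
        ultimately show "A j + (\<Sum>k=1..K1. (ch j k \<omega>)\<^sup>2 - 2 * c j k * ch j k \<omega>) =
            (LINT y|Mv. (p (\<theta> j) y - p_hat \<psi> q Y N K1 j y \<omega>)\<^sup>2 * inverse (q y))" by simp
      qed
      have Q_nn: "0 \<le> Q \<omega>" for \<omega>
        unfolding Q_int_eq
        by (intro sum_nonneg integral_nonneg_AE AE_I2) (use q_pos in \<open>auto intro!: mult_nonneg_nonneg\<close>)
      have e_eq: "e_L2 Mv \<psi> q (\<lambda>j. p (\<theta> j)) Mc Y N K1 = (\<lambda>\<omega>. sqrt (Q \<omega>))"
        unfolding e_L2_def Q_int_eq ..
      have Q_int: "integrable P Q"
        unfolding Q_def using mom
        by (intro Bochner_Integration.integrable_sum Bochner_Integration.integrable_add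
            Bochner_Integration.integrable_diff integrable_mult_right) auto
      have EQ: "expectation Q = (\<Sum>j=1..Mc. A j + (\<Sum>k=1..K1. V j k / real N - (c j k)\<^sup>2))"
      proof -
        have "expectation Q = (\<Sum>j=1..Mc. expectation (\<lambda>\<omega>. A j + (\<Sum>k=1..K1. (ch j k \<omega>)\<^sup>2 - 2 * c j k * ch j k \<omega>)))"
          unfolding Q_def using mom
          by (intro Bochner_Integration.integral_sum Bochner_Integration.integrable_sum Bochner_Integration.integrable_add
            Bochner_Integration.integrable_diff integrable_mult_right) auto
        also have "\<dots> = (\<Sum>j=1..Mc. A j + (\<Sum>k=1..K1. V j k / real N - (c j k)\<^sup>2))"
        proof (rule sum.cong[OF refl])
          fix j assume j: "j \<in> {1..Mc}"
          have "expectation (\<lambda>\<omega>. A j + (\<Sum>k=1..K1. (ch j k \<omega>)\<^sup>2 - 2 * c j k * ch j k \<omega>)) =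
              A j + expectation (\<lambda>\<omega>. \<Sum>k=1..K1. (ch j k \<omega>)\<^sup>2 - 2 * c j k * ch j k \<omega>)"
            using mom j by (subst Bochner_Integration.integral_add) (auto intro!: Bochner_Integration.integrable_sum simp: prob_space)
          also have "expectation (\<lambda>\<omega>. \<Sum>k=1..K1. (ch j k \<omega>)\<^sup>2 - 2 * c j k * ch j k \<omega>) =
              (\<Sum>k=1..K1. expectation (\<lambda>\<omega>. (ch j k \<omega>)\<^sup>2 - 2 * c j k * ch j k \<omega>))"
            using mom j by (intro Bochner_Integration.integral_sum) auto
          also have "\<dots> = (\<Sum>k=1..K1. V j k / real N - (c j k)\<^sup>2)"
          proof (rule sum.cong[OF refl])
            fix k assume k: "k \<in> {1..K1}"
            show "expectation (\<lambda>\<omega>. (ch j k \<omega>)\<^sup>2 - 2 * c j k * ch j k \<omega>) = V j k / real N - (c j k)\<^sup>2"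
              using mom[OF j k] by (simp add: power2_eq_square)
          qed
          finally show "expectation (\<lambda>\<omega>. A j + (\<Sum>k=1..K1. (ch j k \<omega>)\<^sup>2 - 2 * c j k * ch j k \<omega>)) =
              A j + (\<Sum>k=1..K1. V j k / real N - (c j k)\<^sup>2)" .
        qed
        finally show ?thesis .
      qed
      have EQ_le: "expectation Q \<le> err_bound Mv \<psi> (\<lambda>j. p (\<theta> j)) Mc N K1"
      proof -
        have "expectation Q = (\<Sum>j=1..Mc. A j - (\<Sum>k=1..K1. (c j k)\<^sup>2)) + (1 / real N) * (\<Sum>j=1..Mc. \<Sum>k=1..K1. V j k)"
          unfolding EQ by (simp add: sum.distrib sum_subtractf sum_divide_distrib[symmetric] sum_distrib_left[symmetric] algebra_simps)
        also have "\<dots> \<le> Tl K1 + (1 / real N) * (\<Sum>j=1..Mc. \<Sum>k=1..K1. V j k)"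
          unfolding Tl_def using A_tail by (intro add_right_mono sum_mono) auto
        finally show ?thesis unfolding err_eq .
      qed
      have Qm[measurable]: "Q \<in> borel_measurable P" using Q_int by auto
      define e where "e = e_L2 Mv \<psi> q (\<lambda>j. p (\<theta> j)) Mc Y N K1"
      have em[measurable]: "e \<in> borel_measurable P" unfolding e_def e_eq by measurable
      have e2: "(\<lambda>\<omega>. (e \<omega>)\<^sup>2) = Q" unfolding e_def e_eq using Q_nn by (intro ext) simp
      have ie2: "integrable P (\<lambda>\<omega>. (e \<omega>)\<^sup>2)" unfolding e2 by (rule Q_int)
      have ie: "integrable P e" by (rule square_integrable_imp_integrable[OF em ie2])
      have veq: "variance e = expectation (\<lambda>\<omega>. (e \<omega>)\<^sup>2) - (expectation e)\<^sup>2"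
        by (rule variance_eq[OF ie ie2])
      have vnn: "0 \<le> variance e" by (intro integral_nonneg_AE AE_I2) simp
      have Ee2: "expectation (\<lambda>\<omega>. (e \<omega>)\<^sup>2) \<le> err_bound Mv \<psi> (\<lambda>j. p (\<theta> j)) Mc N K1"
        unfolding e2 by (rule EQ_le)
      have sq: "(expectation e)\<^sup>2 \<le> err_bound Mv \<psi> (\<lambda>j. p (\<theta> j)) Mc N K1" using veq vnn Ee2 by linarith
      have "expectation e \<le> sqrt ((expectation e)\<^sup>2)" by simp
      also have "\<dots> \<le> sqrt (err_bound Mv \<psi> (\<lambda>j. p (\<theta> j)) Mc N K1)" using sq by (rule real_sqrt_le_mono)
      finally have Ee: "expectation e \<le> sqrt (err_bound Mv \<psi> (\<lambda>j. p (\<theta> j)) Mc N K1)" .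
      have Ve: "variance e \<le> err_bound Mv \<psi> (\<lambda>j. p (\<theta> j)) Mc N K1"
        using veq Ee2 by (smt (verit) zero_le_power2)
      show ?thesis using ie ie2 Ee Ve unfolding e_def by blast
    qed
  qed
  have part2: "\<forall>\<epsilon>>0. \<exists>K1\<ge>(1::nat). \<exists>Nmin::nat. \<forall>N>Nmin. \<forall>(P::'w measure) Y.
           iid_samples P Mv Y N Mc (\<lambda>j. p (\<theta> j)) \<longrightarrow>
             prob_space.expectation P (e_L2 Mv \<psi> q (\<lambda>j. p (\<theta> j)) Mc Y N K1) < \<epsilon> \<and>
             prob_space.variance P (e_L2 Mv \<psi> q (\<lambda>j. p (\<theta> j)) Mc Y N K1) < \<epsilon>"
  proof (intro allI impI)
    fix \<epsilon> :: real assume \<epsilon>: "\<epsilon> > 0"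
    define \<delta> where "\<delta> = min \<epsilon> (\<epsilon>\<^sup>2)"
    have \<delta>0: "\<delta> > 0" using \<epsilon> unfolding \<delta>_def by auto
    have \<delta>1: "\<delta> \<le> \<epsilon>" and \<delta>2: "\<delta> \<le> \<epsilon>\<^sup>2" unfolding \<delta>_def by auto
    have "(\<lambda>K. \<Sum>j=1..Mc. \<Sum>k. (c j (k + K + 1))\<^sup>2) \<longlonglongrightarrow> (\<Sum>j=1..Mc. 0)"
    proof (rule tendsto_sum)
      fix j assume j: "j \<in> {1..Mc}"
      show "(\<lambda>K. \<Sum>k. (c j (k + K + 1))\<^sup>2) \<longlonglongrightarrow> 0"
        using suminf_exist_split2[OF summ[OF j]] by simp
    qed
    then have "Tl \<longlonglongrightarrow> 0" unfolding Tl_def[abs_def] by simp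
    then have "eventually (\<lambda>K. Tl K < \<delta> / 2) sequentially" by (rule order_tendstoD) (use \<delta>0 in simp)
    moreover have "eventually (\<lambda>K. K \<ge> (1::nat)) sequentially" by (rule eventually_ge_at_top)
    ultimately have "eventually (\<lambda>K. Tl K < \<delta> / 2 \<and> K \<ge> 1) sequentially" by (rule eventually_conj)
    then obtain K where KT: "Tl K < \<delta> / 2" and K1: "K \<ge> 1" unfolding eventually_sequentially by auto
    define W where "W = (\<Sum>j=1..Mc. \<Sum>k=1..K. V j k)"
    define Nmin where "Nmin = nat \<lceil>2 * \<bar>W\<bar> / \<delta>\<rceil>"
    show "\<exists>K1\<ge>(1::nat). \<exists>Nmin::nat. \<forall>N>Nmin. \<forall>(P::'w measure) Y.
           iid_samples P Mv Y N Mc (\<lambda>j. p (\<theta> j)) \<longrightarrow>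
             prob_space.expectation P (e_L2 Mv \<psi> q (\<lambda>j. p (\<theta> j)) Mc Y N K1) < \<epsilon> \<and>
             prob_space.variance P (e_L2 Mv \<psi> q (\<lambda>j. p (\<theta> j)) Mc Y N K1) < \<epsilon>"
    proof -
    have main: "\<forall>N>Nmin. \<forall>(P::'w measure) Y.
           iid_samples P Mv Y N Mc (\<lambda>j. p (\<theta> j)) \<longrightarrow>
             prob_space.expectation P (e_L2 Mv \<psi> q (\<lambda>j. p (\<theta> j)) Mc Y N K) < \<epsilon> \<and>
             prob_space.variance P (e_L2 Mv \<psi> q (\<lambda>j. p (\<theta> j)) Mc Y N K) < \<epsilon>"
    proof (intro allI impI)
      fix N :: nat and P :: "'w measure" and Y :: "nat \<Rightarrow> nat \<Rightarrow> 'w \<Rightarrow> 'a"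
      assume NN: "N > Nmin" and iid: "iid_samples P Mv Y N Mc (\<lambda>j. p (\<theta> j))"
      have N1: "N \<ge> 1" using NN by auto
      have "2 * \<bar>W\<bar> / \<delta> \<le> real Nmin" unfolding Nmin_def by (rule real_nat_ceiling_ge)
      also have "\<dots> < real N" using NN by simp
      finally have "2 * \<bar>W\<bar> / \<delta> < real N" .
      then have h1: "2 * \<bar>W\<bar> < real N * \<delta>" by (simp only: pos_divide_less_eq[OF \<delta>0])
      have Npos: "real N > 0" using N1 by simp
      have h2: "\<delta> / 2 * real N = real N * \<delta> / 2" by simp
      have "\<bar>W\<bar> < \<delta> / 2 * real N" using h1 h2 by linarith
      then have h3: "\<bar>W\<bar> / real N < \<delta> / 2" by (simp only: pos_divide_less_eq[OF Npos])
      have "W / real N \<le> \<bar>W\<bar> / real N" using Npos by (intro divide_right_mono) auto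
      then have WN: "(1 / real N) * W < \<delta> / 2" using h3 by simp
      have err: "err_bound Mv \<psi> (\<lambda>j. p (\<theta> j)) Mc N K < \<delta>" unfolding err_eq W_def[symmetric] using KT WN by linarith
      have P1: "prob_space.expectation P (e_L2 Mv \<psi> q (\<lambda>j. p (\<theta> j)) Mc Y N K) \<le> sqrt (err_bound Mv \<psi> (\<lambda>j. p (\<theta> j)) Mc N K)"
        and P2: "prob_space.variance P (e_L2 Mv \<psi> q (\<lambda>j. p (\<theta> j)) Mc Y N K) \<le> err_bound Mv \<psi> (\<lambda>j. p (\<theta> j)) Mc N K"
        using part1[THEN spec[of _ N], THEN spec[of _ K], THEN spec[of _ P], THEN spec[of _ Y], THEN mp, OF conjI[OF N1 conjI[OF K1 iid]]]
        by auto
      have "sqrt (err_bound Mv \<psi> (\<lambda>j. p (\<theta> j)) Mc N K) < sqrt (\<epsilon>\<^sup>2)"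
        using err \<delta>2 by (intro real_sqrt_less_mono) linarith
      also have "\<dots> = \<epsilon>" using \<epsilon> by simp
      finally have E1: "prob_space.expectation P (e_L2 Mv \<psi> q (\<lambda>j. p (\<theta> j)) Mc Y N K) < \<epsilon>" using P1 by linarith
      have E2: "prob_space.variance P (e_L2 Mv \<psi> q (\<lambda>j. p (\<theta> j)) Mc Y N K) < \<epsilon>" using P2 err \<delta>1 by linarith
      show "prob_space.expectation P (e_L2 Mv \<psi> q (\<lambda>j. p (\<theta> j)) Mc Y N K) < \<epsilon> \<and>
             prob_space.variance P (e_L2 Mv \<psi> q (\<lambda>j. p (\<theta> j)) Mc Y N K) < \<epsilon>" using E1 E2 by (rule conjI)
    qed
    show ?thesis using K1 main by blast
    qed
  qed
  show ?thesis by (rule conjI[OF part1 part2])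
qed

end
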